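(* Let $\Sigma,\Gamma$ be finite alphabets, each with at least two letters. For every infinite word $w\in\Sigma^{\mathbb{N}}$, $$\mathrm{ACE}_{\mathcal{I}}(w) = \sup_{h\in\mathcal{I}}\Big(\limsup_{n\to\infty}\sup\{\mathrm{E}(h(f)) : f\in\mathrm{Fact}_n(w)\}\Big).$$
   Context: $\mathrm{Fact}_n(w)$ is the set of length-$n$ factors of $w$. For a nonempty word $v$ and integer $p\ge0$, $v^{p/|v|}$ is the prefix of length $p$ of $vvv\cdots$. For a nonempty finite word $u$, $\mathrm{E}(u) = \sup\{ r \in \mathbb{Q} : u = v^r \text{ for some nonempty } v\}$. For an infinite word $w$, $\mathrm{ACE}(w) = \limsup_{n\to\infty}\sup\{\mathrm{E}(u) : u\in\mathrm{Fact}_n(w)\}$. $\mathcal{I}$ is the set of injective morphisms $\Sigma^*\to\Gamma^*$ and $\mathrm{ACE}_{\mathcal{I}}(w) = \sup\{\mathrm{ACE}(h(w)) : h\in\mathcal{I}\}$. *)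

theory Defs
  imports "HOL-Library.Extended_Real" "HOL-Library.Liminf_Limsup"
begin

definition Fact :: "nat \<Rightarrow> (nat \<Rightarrow> 'a) \<Rightarrow> 'a list set" where
  "Fact n w = {map w [i..<i+n] | i. True}"

text \<open>v^(p/|v|): the prefix of length p of vvv...\<close>
definition wpow :: "'a list \<Rightarrow> nat \<Rightarrow> 'a list" where
  "wpow v p = map (\<lambda>i. v ! (i mod length v)) [0..<p]"

definition Exp :: "'a list \<Rightarrow> ereal" where
  "Exp u = Sup {ereal (real p / real (length v)) | v p.
                  v \<noteq> [] \<and> u = wpow v p}"

definition ACE :: "(nat \<Rightarrow> 'a) \<Rightarrow> ereal" where
  "ACE w = limsup (\<lambda>n. Sup (Exp ` Fact n w))"

definition hom :: "('a \<Rightarrow> 'b list) \<Rightarrow> 'a list \<Rightarrow> 'b list" where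
  "hom h xs = concat (map h xs)"

text \<open>Image of an infinite word under a (nonerasing) morphism: the i-th letter of h(w)
  is the i-th letter of h(w_0 ... w_i) (correct whenever h is nonerasing, in particular
  whenever hom h is injective).\<close>
definition homw :: "('a \<Rightarrow> 'b list) \<Rightarrow> (nat \<Rightarrow> 'a) \<Rightarrow> nat \<Rightarrow> 'b" where
  "homw h w i = hom h (map w [0..<Suc i]) ! i"

text \<open>ACE over injective morphisms Sigma* -> Gamma*, Gamma given as the type 'b.\<close>
definition ACE_I :: "'b itself \<Rightarrow> (nat \<Rightarrow> 'a) \<Rightarrow> ereal" where
  "ACE_I _ w = Sup {ACE (homw h w) | h :: 'a \<Rightarrow> 'b list. inj (hom h)}"

end

theory Submission
  imports Defs
begin

lemma hom_append: "hom h (xs @ ys) = hom h xs @ hom h ys"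
  by (simp add: hom_def)

lemma hom_Cons: "hom h (a # xs) = h a @ hom h xs"
  by (simp add: hom_def)

lemma inj_nonerasing:
  assumes "inj (hom h)" shows "h a \<noteq> []"
proof
  assume "h a = []"
  then have "hom h [a] = hom h []" by (simp add: hom_def)
  with assms have "[a] = []" by (meson injD)
  then show False by simp
qed

lemma hom_len_ge:
  assumes "\<forall>a. h a \<noteq> []" shows "length xs \<le> length (hom h xs)"
proof (induction xs)
  case (Cons a xs)
  have "1 \<le> length (h a)" using assms by (simp add: Suc_le_eq)
  then show ?case using Cons by (simp add: hom_Cons)
qed (simp add: hom_def)

lemma P_split: "i \<le> j \<Longrightarrow> hom h (map w [0..<j]) = hom h (map w [0..<i]) @ hom h (map w [i..<j])"
proof -
  assume "i \<le> j"
  then have "[0..<j] = [0..<i] @ [i..<j]"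
    by (metis le_Suc_ex upt_add_eq_append zero_le)
  then show ?thesis by (simp add: hom_append)
qed

lemma P_prefix_nth:
  assumes "N \<le> M" "i < length (hom h (map w [0..<N]))"
  shows "hom h (map w [0..<M]) ! i = hom h (map w [0..<N]) ! i"
  using P_split[OF assms(1), of h w] assms(2) by (simp add: nth_append)

lemma homw_nth:
  assumes ne: "\<forall>a. h a \<noteq> []" and i: "i < length (hom h (map w [0..<N]))"
  shows "homw h w i = hom h (map w [0..<N]) ! i"
proof -
  define M where "M = max N (Suc i)"
  have l: "i < length (hom h (map w [0..<Suc i]))"
    using hom_len_ge[OF ne, of "map w [0..<Suc i]"] by simp
  have "homw h w i = hom h (map w [0..<Suc i]) ! i" by (simp add: homw_def)
  also have "\<dots> = hom h (map w [0..<M]) ! i"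
    using P_prefix_nth[of "Suc i" M i h w] l by (simp add: M_def)
  also have "\<dots> = hom h (map w [0..<N]) ! i"
    using P_prefix_nth[of N M i h w] i by (simp add: M_def)
  finally show ?thesis .
qed

lemma hom_factor:
  fixes h w
  assumes ne: "\<forall>a. h a \<noteq> []"
  defines "s \<equiv> \<lambda>k. length (hom h (map w [0..<k]))"
  shows "hom h (map w [i..<i+n]) = map (homw h w) [s i..<s (i+n)]"
proof -
  have sp: "hom h (map w [0..<i+n]) = hom h (map w [0..<i]) @ hom h (map w [i..<i+n])"
    using P_split[of i "i+n" h w] by simp
  then have len: "length (hom h (map w [i..<i+n])) = s (i+n) - s i"
    by (simp add: s_def)
  show ?thesis
  proof (rule nth_equalityI)
    show "length (hom h (map w [i..<i + n])) = length (map (homw h w) [s i..<s (i + n)])"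
      using len by simp
    fix k assume k: "k < length (hom h (map w [i..<i + n]))"
    have "hom h (map w [i..<i + n]) ! k = hom h (map w [0..<i+n]) ! (s i + k)"
      using sp by (simp add: s_def nth_append)
    also have "\<dots> = homw h w (s i + k)"
      using homw_nth[OF ne, of "s i + k" w "i+n"] k len by (simp add: s_def)
    finally show "hom h (map w [i..<i + n]) ! k = map (homw h w) [s i..<s (i + n)] ! k"
      using k len by simp
  qed
qed

lemma per_mod:
  assumes per: "\<forall>i. i + q < length u \<longrightarrow> u ! i = u ! (i + q)" and q: "0 < q"
  shows "i < length u \<Longrightarrow> u ! i = u ! (i mod q)"
proof (induction i rule: less_induct)
  case (less i)
  show ?case
  proof (cases "i < q")
    case True then show ?thesis by simp
  next
    case False
    then have e: "i = (i - q) + q" by simp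
    have "u ! (i - q) = u ! (i - q + q)" using per less.prems e by simp
    then have "u ! (i - q) = u ! i" using e by simp
    moreover have "u ! (i - q) = u ! ((i - q) mod q)"
      using less.IH[of "i - q"] less.prems q False by simp
    moreover have "(i - q) mod q = i mod q" using False by (simp add: le_mod_geq)
    ultimately show ?thesis by simp
  qed
qed

lemma Exp_lower:
  assumes q: "0 < q" and per: "\<forall>i. i + q < length u \<longrightarrow> u ! i = u ! (i + q)"
  shows "ereal (real (length u) / real q) \<le> Exp u"
  unfolding Exp_def
proof (rule Sup_upper)
  define v where "v = map (\<lambda>i. u ! i) [0..<q]"
  have 1: "v \<noteq> []" using q by (simp add: v_def)
  have 2: "real (length u) / real q = real (length u) / real (length v)" by (simp add: v_def)
  have 3: "u = wpow v (length u)"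
  proof (rule nth_equalityI)
    show "length u = length (wpow v (length u))" by (simp add: wpow_def)
    fix i assume "i < length u"
    then show "u ! i = wpow v (length u) ! i"
      using per_mod[OF per q] q by (simp add: wpow_def v_def)
  qed
  show "ereal (real (length u) / real q)
    \<in> {ereal (real p / real (length v)) |v p. v \<noteq> [] \<and> u = wpow v p}"
    using 1 2 3 by blast
qed

lemma Exp_ge0: "0 \<le> Exp u"
proof -
  have "ereal (real (length u) / real (Suc (length u))) \<le> Exp u"
    by (rule Exp_lower) simp_all
  moreover have "0 \<le> ereal (real (length u) / real (Suc (length u)))" by simp
  ultimately show ?thesis by (metis order_trans)
qed

lemma Exp_witness:
  assumes "a < Exp u"
  shows "\<exists>q. 0 < q \<and> (\<forall>i. i + q < length u \<longrightarrow> u ! i = u ! (i + q))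
            \<and> a < ereal (real (length u) / real q)"
proof -
  from assms obtain y where y: "y \<in> {ereal (real p / real (length v)) | v p.
                  v \<noteq> [] \<and> u = wpow v p}" and ay: "a < y"
    unfolding Exp_def less_Sup_iff by auto
  from y obtain v p where v: "v \<noteq> []" "u = wpow v p"
    and yy: "y = ereal (real p / real (length v))" by auto
  have lt: "a < ereal (real p / real (length v))" using ay yy by simp
  have p: "p = length u" using v by (simp add: wpow_def)
  have "\<forall>i. i + length v < length u \<longrightarrow> u ! i = u ! (i + length v)"
    using v by (simp add: wpow_def)
  moreover have "0 < length v" using v by simp
  ultimately show ?thesis using lt p by blast
qed

lemma main_eq:
  fixes h :: "'a::finite \<Rightarrow> 'b list" and w :: "nat \<Rightarrow> 'a"
  assumes ne: "\<forall>a. h a \<noteq> []"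
  shows "ACE (homw h w) = limsup (\<lambda>n. Sup ((\<lambda>f. Exp (hom h f)) ` Fact n w))"
proof -
  define x where "x = homw h w"
  define s where "s = (\<lambda>k. length (hom h (map w [0..<k])))"
  define L where "L = Max (range (\<lambda>a. length (h a)))"
  define E where "E = (\<lambda>m. Sup (Exp ` Fact m x))"
  define F where "F = (\<lambda>n. Sup ((\<lambda>f. Exp (hom h f)) ` Fact n w))"
  have hL: "length (h a) \<le> L" for a
    unfolding L_def by (rule Max_ge) auto
  have h1: "1 \<le> length (h a)" for a using ne by (simp add: Suc_le_eq)
  have L1: "1 \<le> L" using hL[of undefined] h1[of undefined] by simp
  have s0: "s 0 = 0" by (simp add: s_def hom_def)
  have sSuc: "s (Suc k) = s k + length (h (w k))" for k
    using P_split[of k "Suc k" h w] by (simp add: s_def hom_def)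
  have sless: "s k < s (Suc k)" for k using sSuc[of k] ne by simp
  have sle: "s (Suc k) \<le> s k + L" for k using sSuc hL[of "w k"] by simp
  have smono: "strict_mono s" using sless by (simp add: strict_mono_Suc_iff)
  have sadd1: "s i + n \<le> s (i + n)" for i n
  proof (induction n)
    case (Suc n) then show ?case using sless[of "i+n"] by simp
  qed simp
  have sadd2: "s (i + n) \<le> s i + n * L" for i n
  proof (induction n)
    case (Suc n) then show ?case using sle[of "i+n"] by simp
  qed simp
  have cover: "\<exists>k. s k \<le> t \<and> t < s (Suc k)" for t
  proof (induction t)
    case 0 then show ?case using s0 sless[of 0] by (intro exI[of _ 0]) simp
  next
    case (Suc t)
    then obtain k where k: "s k \<le> t" "t < s (Suc k)" by blast
    show ?case
    proof (cases "Suc t < s (Suc k)")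
      case True then show ?thesis using k by (intro exI[of _ k]) simp
    next
      case False
      then have "Suc t = s (Suc k)" using k by simp
      then show ?thesis using sless[of "Suc k"] by (intro exI[of _ "Suc k"]) simp
    qed
  qed
  have hf: "hom h (map w [i..<i+n]) = map x [s i..<s (i+n)]" for i n
    unfolding x_def s_def by (rule hom_factor[OF ne])
  have Fact_hf: "hom h (map w [i..<i+n]) \<in> Fact (s (i+n) - s i) x" for i n
  proof -
    have "s i \<le> s (i+n)" using sadd1[of i n] by simp
    then have "map x [s i..<s (i+n)] = map x [s i..<s i + (s (i+n) - s i)]" by simp
    then show ?thesis unfolding Fact_def hf by blast
  qed
  have part1: "limsup F \<le> limsup E"
  proof (rule ccontr)
    assume "\<not> limsup F \<le> limsup E"
    then have "limsup E < limsup F" by simp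
    then obtain a where a1: "limsup E < ereal a" and a2: "ereal a < limsup F"
      using ereal_dense2 by blast
    from a1 obtain N where N: "Sup (E ` {N..}) < ereal a"
      unfolding limsup_INF_SUP INF_less_iff by blast
    have "ereal a < Sup (F ` {N..})"
      using a2 unfolding limsup_INF_SUP by (meson INF_lower UNIV_I order_less_le_trans)
    then obtain n where n: "n \<ge> N" "ereal a < F n"
      unfolding less_SUP_iff by auto
    then obtain f where f: "f \<in> Fact n w" "ereal a < Exp (hom h f)"
      unfolding F_def less_SUP_iff by auto
    then obtain i where fi: "f = map w [i..<i+n]" unfolding Fact_def by blast
    define l where "l = s (i+n) - s i"
    have ln: "n \<le> l" using sadd1[of i n] by (simp add: l_def)
    have "Exp (hom h f) \<le> E l"
      unfolding E_def using Fact_hf[of i n] fi l_def by (auto intro: Sup_upper)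
    also have "\<dots> \<le> Sup (E ` {N..})" using ln n by (intro SUP_upper) auto
    finally show False using N f by simp
  qed
  have part2: "limsup E \<le> limsup F"
  proof (rule ccontr)
    assume "\<not> limsup E \<le> limsup F"
    then have "limsup F < limsup E" by simp
    then obtain b where b1: "limsup F < ereal b" and b2: "ereal b < limsup E"
      using ereal_dense2 by blast
    then obtain a where a1: "ereal b < ereal a" and a2: "ereal a < limsup E"
      using ereal_dense2 by blast
    have ab: "b < a" using a1 by simp
    from b1 obtain N where N: "Sup (F ` {N..}) < ereal b"
      unfolding limsup_INF_SUP INF_less_iff by blast
    have FN: "F n < ereal b" if "n \<ge> N" for n
      using order_le_less_trans[OF SUP_upper[of n "{N..}" F] N] that by simp
    show False
    proof (cases "b < 0")
      case True
      have "map w [0..<0+N] \<in> Fact N w" unfolding Fact_def by blast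
      then have "Exp (hom h (map w [0..<0+N])) \<le> F N"
        unfolding F_def by (auto intro: Sup_upper)
      then have "0 \<le> F N" using Exp_ge0[of "hom h (map w [0..<0+N])"]
        by (rule order_trans[rotated])
      then have "0 < ereal b" by (rule order_le_less_trans[OF _ FN[of N]]) simp
      then show False using True by simp
    next
      case False
      then have bpos: "0 \<le> b" by simp
      with ab have apos: "0 < a" by simp
      define M where "M = N * L + 2 * L + nat \<lceil>2 * L * a / (a - b)\<rceil>"
      have "ereal a < Sup (E ` {M..})"
        using a2 unfolding limsup_INF_SUP by (meson INF_lower UNIV_I order_less_le_trans)
      then obtain m where m: "m \<ge> M" "ereal a < E m"
        unfolding less_SUP_iff by auto
      then obtain u where u: "u \<in> Fact m x" "ereal a < Exp u"
        unfolding E_def less_SUP_iff by auto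
      then obtain j where uj: "u = map x [j..<j+m]" unfolding Fact_def by blast
      have lu: "length u = m" using uj by simp
      obtain q where q: "0 < q" and per: "\<forall>i. i + q < length u \<longrightarrow> u ! i = u ! (i + q)"
        and aq: "ereal a < ereal (real (length u) / real q)"
        using Exp_witness[OF u(2)] by blast
      have aq': "a * q < m" using aq q lu by (simp add: field_simps)
      have mbig: "2 * L * a / (a - b) \<le> real m"
      proof -
        have "2 * L * a / (a - b) \<le> real (nat \<lceil>2 * L * a / (a - b)\<rceil>)" by linarith
        also have "\<dots> \<le> real M" unfolding M_def by simp
        finally show ?thesis using m(1) by linarith
      qed
      have mNL: "N * L + 2 * L \<le> m" using m(1) unfolding M_def by simp
      obtain k0 where k0: "s k0 \<le> j" "j < s (Suc k0)" using cover by blast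
      obtain i where i: "j \<le> s i" "s i < j + L"
      proof (cases "s k0 = j")
        case True then show ?thesis using that[of k0] L1 by simp
      next
        case False then show ?thesis using that[of "Suc k0"] k0 sle[of k0] by simp
      qed
      obtain k' where k': "s k' \<le> j + m" "j + m < s (Suc k')" using cover by blast
      have k'2: "j + m < s k' + L" using k' sle[of k'] by simp
      have "s i < s k'" using i k'2 mNL by simp
      then have ik: "i < k'" using smono by (simp add: strict_mono_less)
      define n where "n = k' - i"
      have kin: "k' = i + n" using ik by (simp add: n_def)
      define l where "l = s k' - s i"
      define f where "f = map w [i..<i+n]"
      have fF: "f \<in> Fact n w" unfolding Fact_def f_def by blast
      have hfx: "hom h f = map x [s i..<s k']" unfolding f_def kin by (rule hf)
      have llen: "length (hom h f) = l" using hfx by (simp add: l_def)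
      have lm: "m < l + 2 * L" using i k'2 \<open>s i < s k'\<close> by (simp add: l_def)
      have lnL: "l \<le> n * L" using sadd2[of i n] kin by (simp add: l_def)
      have "N * L < n * L" using lm lnL mNL by linarith
      then have nN: "N \<le> n" by simp
      have perf: "\<forall>p. p + q < length (hom h f) \<longrightarrow> hom h f ! p = hom h f ! (p + q)"
      proof (intro allI impI)
        fix p assume p: "p + q < length (hom h f)"
        then have p2: "s i + p + q < s k'" using llen \<open>s i < s k'\<close> by (simp add: l_def)
        have "hom h f ! p = x (s i + p)" using hfx p2 by simp
        also have "\<dots> = u ! (s i - j + p)" using uj i p2 k' by simp
        also have "\<dots> = u ! (s i - j + p + q)" using per lu i p2 k' by simp
        also have "\<dots> = x (s i + p + q)" using uj i p2 k' by simp
        also have "\<dots> = hom h f ! (p + q)" using hfx p2 by (simp add: add.assoc)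
        finally show "hom h f ! p = hom h f ! (p + q)" .
      qed
      have "ereal (real l / real q) \<le> Exp (hom h f)"
        using Exp_lower[OF q perf] llen by simp
      also have "\<dots> \<le> F n" unfolding F_def using fF by (auto intro: Sup_upper)
      finally have lF: "ereal (real l / real q) \<le> F n" .
      have "b \<le> real l / real q"
      proof -
        have "b * q * a \<le> b * m" using aq' bpos
          by (metis mult.commute mult.left_commute mult_left_mono less_imp_le)
        moreover have "2 * L * a \<le> real m * (a - b)"
          using mbig ab by (simp add: field_simps)
        ultimately have "b * q * a \<le> (real m - 2 * L) * a"
          by (simp add: algebra_simps)
        then have "b * q \<le> real m - 2 * L" using apos by simp
        also have "\<dots> \<le> real l" using lm by simp
        finally show ?thesis using q by (simp add: field_simps)
      qed
      then have "ereal b \<le> F n" using lF by (meson ereal_less_eq(3) order_trans)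
      then show False using FN[OF nN] by simp
    qed
  qed
  show ?thesis
    using part1 part2 unfolding ACE_def E_def F_def x_def by simp
qed


theorem theorem19:
  fixes w :: "nat \<Rightarrow> 'a::finite"
  assumes "card (UNIV :: 'a set) \<ge> 2" and "card (UNIV :: 'b::finite set) \<ge> 2"
  shows "ACE_I TYPE('b) w =
    Sup {limsup (\<lambda>n. Sup ((\<lambda>f. Exp (hom h f)) ` Fact n w)) | h :: 'a \<Rightarrow> 'b list. inj (hom h)}"
proof -
  have "{ACE (homw h w) | h :: 'a \<Rightarrow> 'b list. inj (hom h)} =
    {limsup (\<lambda>n. Sup ((\<lambda>f. Exp (hom h f)) ` Fact n w)) | h :: 'a \<Rightarrow> 'b list. inj (hom h)}"
  proof (rule Collect_cong)
    fix y
    have eq: "ACE (homw h w) = limsup (\<lambda>n. Sup ((\<lambda>f. Exp (hom h f)) ` Fact n w))"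
      if "inj (hom h)" for h :: "'a \<Rightarrow> 'b list"
      using main_eq[of h w] inj_nonerasing[OF that] by blast
    show "(\<exists>h :: 'a \<Rightarrow> 'b list. y = ACE (homw h w) \<and> inj (hom h)) =
      (\<exists>h :: 'a \<Rightarrow> 'b list. y = limsup (\<lambda>n. Sup ((\<lambda>f. Exp (hom h f)) ` Fact n w)) \<and> inj (hom h))"
      using eq by metis
  qed
  then show ?thesis unfolding ACE_I_def by simp
qed

end
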